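(* Let $X,Y$ be real Hilbert spaces and $T:X\to Y$ a nonzero, injective, bounded linear operator. Let $x\in X$ and let $0\le\nu\le\gamma$ with $\gamma>0$. Then $$\sup_{\omega\in X,\ \|\omega\|=1}\|(T^*T)^\gamma\omega\|^{-\nu/\gamma}\,|\langle x,\omega\rangle|=N_{\nu/\gamma}\|x\|_{\nu:\gamma}$$ (as elements of $[0,\infty]$).
   Context: For $\gamma>0$, $X_\gamma:=\mathrm{range}((T^*T)^\gamma)$ with norm $\|x\|_\gamma:=\|(T^*T)^{-\gamma}x\|$. For $t>0$, $K^\gamma_t(x):=\inf_{x_1\in X_\gamma}\big(\|x-x_1\|^2+t^2\|x_1\|_\gamma^2\big)^{1/2}$, and for $0\le\nu\le\gamma$, $\|x\|_{\nu:\gamma}:=\sup_{t>0}t^{-\nu/\gamma}K^\gamma_t(x)\in[0,\infty]$. For $0<\theta<1$, $N_\theta:=\big(\theta^\theta(1-\theta)^{1-\theta}\big)^{-1/2}$, and $N_0:=N_1:=1$. *)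

theory Defs
  imports "HOL-Analysis.Analysis"
begin

text \<open>Fractional power A^g (g > 0) of a bounded, self-adjoint, positive (semidefinite)
  operator A on a real Hilbert space, via the norm-convergent binomial series:
  with c = onorm A and B = I - A/c (so 0 <= B <= I),
  A^g = c^g * sum_k (-1)^k (g choose k) B^k.
  For the zero operator we set A^g = 0.\<close>
definition op_powr :: "('a::real_inner \<Rightarrow> 'a) \<Rightarrow> real \<Rightarrow> 'a \<Rightarrow> 'a" where
  "op_powr A g x =
     (let c = onorm A; B = (\<lambda>y. y - (1 / c) *\<^sub>R A y) in
      if c = 0 then 0
      else (c powr g) *\<^sub>R (\<Sum>k. ((-1) ^ k * (g gchoose k)) *\<^sub>R (B ^^ k) x))"

definition TsT :: "('a::real_inner \<Rightarrow> 'b::real_inner) \<Rightarrow> 'a \<Rightarrow> 'a" where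
  "TsT T = adjoint T \<circ> T"

definition Xg :: "('a::real_inner \<Rightarrow> 'b::real_inner) \<Rightarrow> real \<Rightarrow> 'a set" where
  "Xg T g = range (op_powr (TsT T) g)"

definition gnorm :: "('a::real_inner \<Rightarrow> 'b::real_inner) \<Rightarrow> real \<Rightarrow> 'a \<Rightarrow> real" where
  "gnorm T g x = norm (the_inv_into UNIV (op_powr (TsT T) g) x)"

definition Kfun :: "('a::real_inner \<Rightarrow> 'b::real_inner) \<Rightarrow> real \<Rightarrow> real \<Rightarrow> 'a \<Rightarrow> real" where
  "Kfun T g t x = Inf ((\<lambda>x1. sqrt ((norm (x - x1))\<^sup>2 + t\<^sup>2 * (gnorm T g x1)\<^sup>2)) ` Xg T g)"

definition interp_norm :: "('a::real_inner \<Rightarrow> 'b::real_inner) \<Rightarrow> real \<Rightarrow> real \<Rightarrow> 'a \<Rightarrow> ereal" where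
  "interp_norm T nu g x = (SUP t\<in>{0<..}. ereal (t powr (- nu / g) * Kfun T g t x))"

definition Nconst :: "real \<Rightarrow> real" where
  "Nconst \<theta> = (if \<theta> = 0 \<or> \<theta> = 1 then 1
               else (\<theta> powr \<theta> * (1 - \<theta>) powr (1 - \<theta>)) powr (- 1 / 2))"

end

theory Submission
  imports Defs
begin


lemma inner_ext:
  fixes u v :: "'a::real_inner"
  assumes "\<And>z. inner u z = inner v z" shows "u = v"
proof -
  have "inner (u - v) (u - v) = 0" using assms[of "u-v"] by (simp add: inner_diff_left)
  then show ?thesis by simp
qed

lemma par_mid:
  fixes a b :: "'a::real_inner"
  shows "(norm ((1/2) *\<^sub>R (a + b)))\<^sup>2 = ((norm a)\<^sup>2 + (norm b)\<^sup>2)/2 - (norm (a - b))\<^sup>2/4"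
proof -
  have "(norm ((1/2) *\<^sub>R (a + b)))\<^sup>2 = (1/4) * (inner a a + 2 * inner a b + inner b b)"
    unfolding norm_scaleR power_mult_distrib power2_norm_eq_inner
    by (simp add: inner_add_left inner_add_right inner_commute[of b a] power2_eq_square)
  moreover have "(norm (a - b))\<^sup>2 = inner a a - 2 * inner a b + inner b b"
    by (simp add: power2_norm_eq_inner inner_diff_left inner_diff_right inner_commute[of b a])
  ultimately show ?thesis by (simp add: power2_norm_eq_inner field_simps)
qed

lemma quad_zero:
  fixes a b :: real
  assumes "\<And>s. 0 \<le> a * s\<^sup>2 + b * s" shows "b = 0"
proof (rule ccontr)
  assume b: "b \<noteq> 0"
  define s where "s = - b / (2 * (\<bar>a\<bar> + 1))"
  have d: "0 < 2 * (\<bar>a\<bar> + 1)" by simp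
  have "a * s\<^sup>2 + b * s = b\<^sup>2 * (a / (4 * (\<bar>a\<bar> + 1)\<^sup>2) - 1 / (2 * (\<bar>a\<bar> + 1)))"
    unfolding s_def by (simp add: field_simps power2_eq_square)
  moreover have "a / (4 * (\<bar>a\<bar> + 1)\<^sup>2) < 1 / (2 * (\<bar>a\<bar> + 1))"
  proof -
    have "a < 2 * (\<bar>a\<bar> + 1)" by (smt (verit))
    then have "a / (4 * (\<bar>a\<bar> + 1)\<^sup>2) < 2 * (\<bar>a\<bar> + 1) / (4 * (\<bar>a\<bar> + 1)\<^sup>2)"
      by (intro divide_strict_right_mono) auto
    also have "\<dots> = 1 / (2 * (\<bar>a\<bar> + 1))"
    proof -
      have q: "\<And>q::real. q > 0 \<Longrightarrow> 2*q/(4*q\<^sup>2) = 1/(2*q)" by (simp add: power2_eq_square field_simps)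
      show ?thesis using q[of "\<bar>a\<bar> + 1"] by simp
    qed
    finally show ?thesis .
  qed
  moreover have "0 < b\<^sup>2" using b by simp
  ultimately have "a * s\<^sup>2 + b * s < 0" by (simp add: mult_pos_neg)
  with assms[of s] show False by simp
qed

lemma min_exists:
  fixes F :: "'a::{real_inner,complete_space} \<Rightarrow> real"
  assumes cont: "continuous_on UNIV F" and bdd: "\<And>y. m0 \<le> F y" and k: "0 < k"
    and conv: "\<And>a b. F ((1/2) *\<^sub>R (a + b)) \<le> (F a + F b)/2 - k * (norm (a - b))\<^sup>2"
  shows "\<exists>z. \<forall>y. F z \<le> F y"
proof -
  define m where "m = Inf (range F)"
  have bd: "bdd_below (range F)" using bdd by (intro bdd_belowI2) auto
  have mle: "\<And>y. m \<le> F y" unfolding m_def using bd by (simp add: cInf_lower)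
  have "\<forall>n::nat. \<exists>y. F y < m + 1/(Suc n)"
  proof
    fix n :: nat
    have "m < m + 1/Suc n" by simp
    then have "\<exists>v\<in>range F. v < m + 1/Suc n" unfolding m_def
      by (intro cInf_lessD) auto
    then show "\<exists>y. F y < m + 1/Suc n" by auto
  qed
  then obtain Y where Y: "\<And>n. F (Y n) < m + 1 / Suc n" by metis
  have cau: "Cauchy Y"
  proof (rule metric_CauchyI)
    fix e :: real assume e: "0 < e"
    have "0 < k * e\<^sup>2" using k e by simp
    then obtain N::nat where N: "1 / Suc N < k * e\<^sup>2"
      by (metis nat_approx_posE)
    show "\<exists>M. \<forall>p\<ge>M. \<forall>q\<ge>M. dist (Y p) (Y q) < e"
    proof (intro exI allI impI)
      fix p q assume p: "N \<le> p" and q: "N \<le> q"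
      have "k * (norm (Y p - Y q))\<^sup>2 \<le> (F (Y p) + F (Y q))/2 - F ((1/2) *\<^sub>R (Y p + Y q))"
        using conv[of "Y p" "Y q"] by linarith
      also have "\<dots> < ((m + 1/Suc p) + (m + 1/Suc q))/2 - m"
      proof -
        have L: "\<And>u v w m d e::real. u < m + d \<Longrightarrow> v < m + e \<Longrightarrow> m \<le> w \<Longrightarrow> (u+v)/2 - w < (m+d+(m+e))/2 - m"
          by (simp add: field_simps)
        show ?thesis by (rule L[OF Y[of p] Y[of q] mle])
      qed
      also have "\<dots> \<le> 1 / Suc N"
      proof -
        have "1 / real (Suc p) \<le> 1 / Suc N" using p by (simp add: frac_le)
        moreover have "1 / real (Suc q) \<le> 1 / Suc N" using q by (simp add: frac_le)
        moreover have L: "\<And>m d e f::real. d \<le> f \<Longrightarrow> e \<le> f \<Longrightarrow> (m+d+(m+e))/2 - m \<le> f"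
          by (simp add: field_simps)
        ultimately show ?thesis by blast
      qed
      finally have "k * (norm (Y p - Y q))\<^sup>2 < k * e\<^sup>2" using N by linarith
      then have "(norm (Y p - Y q))\<^sup>2 < e\<^sup>2" using k by simp
      then have "norm (Y p - Y q) < e" using e by (simp add: power2_less_imp_less)
      then show "dist (Y p) (Y q) < e" by (simp add: dist_norm)
    qed
  qed
  then obtain z where z: "Y \<longlonglongrightarrow> z" using Cauchy_convergent_iff convergent_def by blast
  have "(\<lambda>n. F (Y n)) \<longlonglongrightarrow> F z"
    using cont z by (metis UNIV_I continuous_on_def tendsto_at_iff_tendsto_nhds continuous_on_tendsto_compose eventually_sequentially)
  moreover have "(\<lambda>n. F (Y n)) \<longlonglongrightarrow> m"
  proof (rule tendsto_sandwich[of "\<lambda>n. m" _ _ "\<lambda>n. m + 1 / Suc n"])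
    show "\<forall>\<^sub>F n in sequentially. m \<le> F (Y n)" using mle by simp
    show "\<forall>\<^sub>F n in sequentially. F (Y n) \<le> m + 1 / Suc n" using Y by (simp add: less_imp_le)
    show "(\<lambda>n. m) \<longlonglongrightarrow> m" by simp
    show "(\<lambda>n. m + 1 / real (Suc n)) \<longlonglongrightarrow> m"
      using tendsto_add[OF tendsto_const[of m] LIMSEQ_inverse_real_of_nat] by (simp add: inverse_eq_divide)
  qed
  ultimately have "F z = m" using LIMSEQ_unique by blast
  then show ?thesis using mle by auto
qed

lemma riesz:
  fixes f :: "'a::{real_inner,complete_space} \<Rightarrow> real"
  assumes f: "bounded_linear f" shows "\<exists>z. \<forall>x. f x = inner x z"
proof -
  interpret f: bounded_linear f by fact
  obtain K where K: "\<And>x. norm (f x) \<le> norm x * K" and K0: "0 < K" using f.pos_bounded by blast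
  define F where "F y = (norm y)\<^sup>2 - 2 * f y" for y
  have cont: "continuous_on UNIV F" unfolding F_def
    by (intro continuous_intros f.continuous_on)
  have bdd: "- (K\<^sup>2) \<le> F y" for y
  proof -
    have "f y \<le> norm y * K" using K[of y] by simp
    then have "F y \<ge> (norm y)\<^sup>2 - 2 * (norm y * K)" unfolding F_def by simp
    moreover have "(norm y)\<^sup>2 - 2 * (norm y * K) \<ge> - (K\<^sup>2)"
      using sum_power2_ge_zero[of "norm y - K" 0] by (simp add: power2_eq_square algebra_simps)
    ultimately show ?thesis by linarith
  qed
  have conv: "F ((1/2) *\<^sub>R (a + b)) \<le> (F a + F b)/2 - (1/4) * (norm (a - b))\<^sup>2" for a b
    unfolding F_def par_mid by (simp add: f.add f.scaleR algebra_simps)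
  obtain z where z: "\<And>y. F z \<le> F y" using min_exists[OF cont bdd, of "1/4"] conv by force
  have "f h = inner h z" for h
  proof -
    have "\<And>s. 0 \<le> (norm h)\<^sup>2 * s\<^sup>2 + (2 * inner z h - 2 * f h) * s"
    proof -
      fix s :: real
      have "F (z + s *\<^sub>R h) = F z + (norm h)\<^sup>2 * s\<^sup>2 + (2 * inner z h - 2 * f h) * s"
        unfolding F_def power2_norm_eq_inner by (simp add: inner_add_left inner_add_right
            f.add f.scaleR inner_commute algebra_simps power2_eq_square)
      then show "0 \<le> (norm h)\<^sup>2 * s\<^sup>2 + (2 * inner z h - 2 * f h) * s" using z[of "z + s *\<^sub>R h"] by simp
    qed
    then have "2 * inner z h - 2 * f h = 0" by (rule quad_zero)
    then show ?thesis by (simp add: inner_commute)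
  qed
  then show ?thesis by blast
qed

lemma adjoint_works':
  fixes T :: "'a::{real_inner,complete_space} \<Rightarrow> 'b::real_inner"
  assumes "bounded_linear T"
  shows "T x \<bullet> y = x \<bullet> adjoint T y"
proof -
  have "\<forall>y. \<exists>z. \<forall>x. T x \<bullet> y = x \<bullet> z"
  proof
    fix y
    have "bounded_linear (\<lambda>x. T x \<bullet> y)"
      using bounded_linear_compose[OF bounded_linear_inner_left assms] by simp
    then show "\<exists>z. \<forall>x. T x \<bullet> y = x \<bullet> z" by (rule riesz)
  qed
  then have "\<exists>g. \<forall>x y. T x \<bullet> y = x \<bullet> g y" by metis
  then have "\<forall>x y. T x \<bullet> y = x \<bullet> adjoint T y"
    unfolding adjoint_def by (rule someI_ex)
  then show ?thesis by blast
qed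


definition coef :: "real \<Rightarrow> nat \<Rightarrow> real" where
  "coef g k = (-1)^k * (g gchoose k)"

definition Rp :: "real \<Rightarrow> nat \<Rightarrow> real" where
  "Rp a m = pochhammer a m / fact m"

lemma Rp_Suc: "Rp a (Suc m) = Rp a m * (a + m) / (m + 1)"
  unfolding Rp_def by (simp add: pochhammer_Suc field_simps)

lemma Rp_0: "Rp a 0 = 1" by (simp add: Rp_def)

lemma coef_Rp: "coef g k = Rp (-g) k"
  unfolding coef_def Rp_def gbinomial_pochhammer
  by (simp add: power_mult_distrib[symmetric] flip: power_add mult_2)

lemma coef_partial: "(\<Sum>k\<le>m. coef g k) = Rp (1 - g) m"
proof -
  have "(\<Sum>k\<le>m. coef g k) = (\<Sum>k\<le>m. (g gchoose k) * (- 1) ^ k)"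
    unfolding coef_def by (simp add: mult.commute)
  also have "\<dots> = (- 1) ^ m * (g - 1 gchoose m)" by (rule gbinomial_sum_lower_neg)
  also have "\<dots> = Rp (1 - g) m"
    unfolding Rp_def gbinomial_pochhammer
    by (simp flip: power_add mult_2)
  finally show ?thesis .
qed

lemma Rp_sign:
  assumes "0 \<le> a + real K" "K \<le> m"
  shows "(0 \<le> Rp a K \<longrightarrow> 0 \<le> Rp a m) \<and> (Rp a K \<le> 0 \<longrightarrow> Rp a m \<le> 0)"
  using assms(2)
proof (induction m rule: dec_induct)
  case base then show ?case by simp
next
  case (step m)
  define r where "r = (a + m) / (m + 1)"
  have am: "0 \<le> a + m" using assms(1) step(1) by linarith
  have r: "0 \<le> r" unfolding r_def using am by simp
  have e: "Rp a (Suc m) = Rp a m * r" unfolding r_def by (simp add: Rp_Suc)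
  show ?case unfolding e using step.IH r by (auto intro: mult_nonneg_nonneg mult_nonpos_nonneg)
qed

lemma Rp_bound:
  assumes "0 \<le> a + real K" "a \<le> 1" "K \<le> m"
  shows "\<bar>Rp a m\<bar> \<le> \<bar>Rp a K\<bar>"
  using assms(3)
proof (induction m rule: dec_induct)
  case base then show ?case by simp
next
  case (step m)
  have am: "0 \<le> a + m" using assms(1) step(1) by linarith
  have r0: "0 \<le> (a + m) / (m + 1)" using am by simp
  have r1: "(a + m) / (m + 1) \<le> 1" using assms(2) by simp
  have "\<bar>Rp a (Suc m)\<bar> = \<bar>Rp a m\<bar> * ((a + m) / (m + 1))"
    using r0 am by (simp add: Rp_Suc abs_mult)
  also have "\<dots> \<le> \<bar>Rp a m\<bar> * 1" using r0 r1 by (intro mult_left_mono) auto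
  finally show ?case using step by simp
qed

lemma coef_summable:
  assumes g: "0 \<le> g"
  shows "summable (\<lambda>k. \<bar>coef g k\<bar>)"
proof -
  define K where "K = nat \<lceil>g\<rceil>"
  have gK: "g \<le> real K" unfolding K_def by linarith
  define S where "S m = (\<Sum>k\<le>m. coef g k)" for m
  define Mb where "Mb = (\<Sum>j\<le>K. \<bar>S j\<bar>)"
  have Sb: "\<bar>S m\<bar> \<le> Mb" for m
  proof (cases "m \<le> K")
    case True
    then show ?thesis unfolding Mb_def
      by (intro member_le_sum[where f="\<lambda>j. \<bar>S j\<bar>"]) auto
  next
    case False
    have "\<bar>S m\<bar> \<le> \<bar>S K\<bar>" unfolding S_def coef_partial
      using False g gK by (intro Rp_bound) auto
    also have "\<bar>S K\<bar> \<le> Mb" unfolding Mb_def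
      by (intro member_le_sum[where f="\<lambda>j. \<bar>S j\<bar>"]) auto
    finally show ?thesis .
  qed
  define d where "d n = coef g (n + K)" for n
  have dsum: "(\<Sum>k\<le>n. d k) = S (n + K) - (\<Sum>k<K. coef g k)" for n
  proof (induction n)
    case 0
    have "S K = (\<Sum>k<K. coef g k) + coef g K" unfolding S_def
      by (simp add: lessThan_Suc_atMost[symmetric])
    then show ?case by (simp add: d_def)
  next
    case (Suc n)
    then show ?case by (simp add: d_def S_def)
  qed
  have sgn: "(0 \<le> coef g K \<longrightarrow> 0 \<le> d n) \<and> (coef g K \<le> 0 \<longrightarrow> d n \<le> 0)" for n
    unfolding d_def coef_Rp using Rp_sign[of "-g" K "n + K"] gK by simp
  define C0 where "C0 = (\<Sum>k<K. \<bar>coef g k\<bar>)"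
  have C0: "\<bar>\<Sum>k<K. coef g k\<bar> \<le> C0" unfolding C0_def by (rule sum_abs)
  have "summable (\<lambda>n. \<bar>d n\<bar>)"
  proof (rule bounded_imp_summable)
    fix n
    show "0 \<le> \<bar>d n\<bar>" by simp
    have "(\<Sum>k\<le>n. \<bar>d k\<bar>) = \<bar>\<Sum>k\<le>n. d k\<bar>"
    proof (cases "0 \<le> coef g K")
      case True
      then have "\<And>k. \<bar>d k\<bar> = d k" using sgn by simp
      moreover have "0 \<le> (\<Sum>k\<le>n. d k)" using True sgn by (intro sum_nonneg) auto
      ultimately show ?thesis by simp
    next
      case False
      then have "\<And>k. \<bar>d k\<bar> = - d k" using sgn by (meson abs_of_nonpos linorder_linear)
      moreover have "(\<Sum>k\<le>n. d k) \<le> 0" using False sgn by (intro sum_nonpos) auto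
      ultimately show ?thesis by (simp add: sum_negf)
    qed
    also have "\<dots> \<le> Mb + C0" unfolding dsum using Sb[of "n+K"] C0 by linarith
    finally show "(\<Sum>k\<le>n. \<bar>d k\<bar>) \<le> Mb + C0" .
  qed
  then show ?thesis unfolding d_def by (subst summable_iff_shift[symmetric, of _ K]) simp
qed

lemma coef_0: "coef g 0 = 1" by (simp add: coef_def)

lemma coef_Suc_pascal: "coef (g + 1) (Suc k) = coef g (Suc k) - coef g k"
  unfolding coef_def gbinomial_Suc_Suc by (simp add: algebra_simps)

lemma coef_zero_g: "coef 0 (Suc k) = 0"
  unfolding coef_def by simp


lemma summable_Cauchy_cs: "summable f \<longleftrightarrow> (\<forall>e>0. \<exists>N. \<forall>m\<ge>N. \<forall>n. norm (sum f {m..<n}) < e)" (is "_ = ?rhs")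
  for f :: "nat \<Rightarrow> 'a::{real_normed_vector,complete_space}"
proof
  assume f: "summable f"
  show ?rhs
  proof clarify
    fix e :: real
    assume "0 < e"
    then obtain M where M: "\<And>m n. \<lbrakk>m\<ge>M; n\<ge>M\<rbrakk> \<Longrightarrow> norm (sum f {..<m} - sum f {..<n}) < e"
      using f by (force simp add: summable_iff_convergent Cauchy_convergent_iff [symmetric] Cauchy_iff)
    have "norm (sum f {m..<n}) < e" if "m \<ge> M" for m n
    proof (cases m n rule: linorder_class.le_cases)
      assume "m \<le> n"
      then show ?thesis
        by (metis (mono_tags, opaque_lifting) M atLeast0LessThan order_trans sum_diff_nat_ivl that zero_le)
    next
      assume "n \<le> m"
      then show ?thesis
        by (simp add: \<open>0 < e\<close>)
    qed
    then show "\<exists>N. \<forall>m\<ge>N. \<forall>n. norm (sum f {m..<n}) < e"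
      by blast
  qed
next
  assume r: ?rhs
  then show "summable f"
    unfolding summable_iff_convergent Cauchy_convergent_iff [symmetric] Cauchy_iff
  proof clarify
    fix e :: real
    assume "0 < e"
    with r obtain N where N: "\<And>m n. m \<ge> N \<Longrightarrow> norm (sum f {m..<n}) < e"
      by blast
    have "norm (sum f {..<m} - sum f {..<n}) < e" if "m\<ge>N" "n\<ge>N" for m n
    proof (cases m n rule: linorder_class.le_cases)
      assume "m \<le> n"
      then show ?thesis
        by (metis N finite_lessThan lessThan_minus_lessThan lessThan_subset_iff norm_minus_commute sum_diff \<open>m\<ge>N\<close>)
    next
      assume "n \<le> m"
      then show ?thesis
        by (metis N finite_lessThan lessThan_minus_lessThan lessThan_subset_iff sum_diff \<open>n\<ge>N\<close>)
    qed
    then show "\<exists>M. \<forall>m\<ge>M. \<forall>n\<ge>M. norm (sum f {..<m} - sum f {..<n}) < e"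
      by blast
  qed
qed

lemma summable_norm_cancel_cs: "summable (\<lambda>n. norm (f n)) \<Longrightarrow> summable f"
  for f :: "nat \<Rightarrow> 'a::{real_normed_vector,complete_space}"
  unfolding summable_Cauchy_cs summable_Cauchy
  apply (erule all_forward imp_forward ex_forward | assumption)+
  apply (fastforce simp add: order_le_less_trans [OF norm_sum] order_le_less_trans [OF abs_ge_self])
  done

lemma summable_norm_cs:
  fixes f :: "nat \<Rightarrow> 'a::{real_normed_vector,complete_space}"
  assumes "summable (\<lambda>n. norm (f n))" shows "norm (suminf f) \<le> (\<Sum>n. norm (f n))"
proof (rule LIMSEQ_le[OF tendsto_norm[OF summable_LIMSEQ[OF summable_norm_cancel_cs[OF assms]]] summable_LIMSEQ[OF assms]])
  show "\<exists>N. \<forall>n\<ge>N. norm (sum f {..<n}) \<le> (\<Sum>i<n. norm (f i))" using norm_sum by blast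
qed

locale posop =
  fixes A :: "'a::{real_inner,complete_space} \<Rightarrow> 'a"
  assumes blA: "bounded_linear A"
    and symA: "\<And>x y. inner (A x) y = inner x (A y)"
    and posA: "\<And>x. 0 \<le> inner (A x) x"
    and bndA: "\<And>x. (norm (A x))\<^sup>2 \<le> onorm A * inner (A x) x"
    and nzA: "onorm A \<noteq> 0"
begin

definition B where "B y = y - (1 / onorm A) *\<^sub>R A y"
definition Pw where "Pw g x = onorm A powr g *\<^sub>R (\<Sum>k. coef g k *\<^sub>R (B ^^ k) x)"

lemma c_pos: "0 < onorm A"
  using onorm_pos_le[OF blA] nzA by simp

lemma op_powr_eq: "op_powr A g x = Pw g x"
  unfolding op_powr_def Pw_def Let_def B_def coef_def using nzA by simp

lemma B_lin: "bounded_linear B"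
proof -
  have "bounded_linear (\<lambda>y. y - (1 / onorm A) *\<^sub>R A y)"
    by (intro bounded_linear_sub bounded_linear_ident bounded_linear_compose[OF bounded_linear_scaleR_right blA])
  then show ?thesis unfolding B_def[abs_def] .
qed

lemma B_sym: "inner (B x) y = inner x (B y)"
  unfolding B_def by (simp add: inner_diff_left inner_diff_right symA)

lemma A_via_B: "A y = onorm A *\<^sub>R (y - B y)"
  unfolding B_def using c_pos by simp

lemma B_norm: "norm (B y) \<le> norm y"
proof -
  define c where "c = onorm A"
  have c: "0 < c" using c_pos c_def by simp
  define a where "a = 1 / c"
  have a: "0 < a" using c a_def by simp
  have ac: "a * c = 1" using c a_def by simp
  define p where "p = inner (A y) y"
  have p: "0 \<le> p" using posA p_def by simp
  have "(norm (B y))\<^sup>2 = inner (y - a *\<^sub>R A y) (y - a *\<^sub>R A y)"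
    unfolding B_def c_def[symmetric] a_def[symmetric] by (simp add: power2_norm_eq_inner)
  also have "\<dots> = inner y y - 2 * a * p + a\<^sup>2 * inner (A y) (A y)"
    unfolding p_def by (simp add: inner_diff_left inner_diff_right inner_commute[of y "A y"] power2_eq_square algebra_simps)
  also have "inner (A y) (A y) = (norm (A y))\<^sup>2" by (simp add: power2_norm_eq_inner)
  also have "a\<^sup>2 * (norm (A y))\<^sup>2 \<le> a\<^sup>2 * (c * p)"
    using bndA[of y] unfolding c_def[symmetric] p_def[symmetric] by (intro mult_left_mono) auto
  also have "a\<^sup>2 * (c * p) = a * p" using ac by (simp add: power2_eq_square algebra_simps)
  finally have "(norm (B y))\<^sup>2 \<le> inner y y - a * p" by simp
  also have "\<dots> \<le> (norm y)\<^sup>2" using a p by (simp add: power2_norm_eq_inner)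
  finally show ?thesis by (rule power2_le_imp_le) simp
qed

lemma Bk_lin: "bounded_linear (B ^^ k)"
proof (induction k)
  case 0 then show ?case by (simp add: id_def bounded_linear_ident)
next
  case (Suc k) then show ?case by (simp add: bounded_linear_compose[OF B_lin] comp_def)
qed

lemma Bk_norm: "norm ((B ^^ k) y) \<le> norm y"
  by (induction k) (auto intro: order_trans[OF B_norm])

lemma Bk_sym: "inner ((B ^^ k) x) y = inner x ((B ^^ k) y)"
proof (induction k arbitrary: x y)
  case 0 then show ?case by simp
next
  case (Suc k)
  have "inner ((B ^^ Suc k) x) y = inner (B ((B ^^ k) x)) y" by simp
  also have "\<dots> = inner ((B ^^ k) x) (B y)" by (rule B_sym)
  also have "\<dots> = inner x ((B ^^ k) (B y))" by (rule Suc)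
  also have "\<dots> = inner x ((B ^^ Suc k) y)" by (simp add: funpow_Suc_right del: funpow.simps)
  finally show ?case .
qed

lemma term_norm: "norm (coef g k *\<^sub>R (B ^^ k) x) \<le> \<bar>coef g k\<bar> * norm x"
  using Bk_norm[of k x] by (simp add: mult_left_mono)

lemma Pw_norm_summable:
  assumes "0 \<le> g" shows "summable (\<lambda>k. norm (coef g k *\<^sub>R (B ^^ k) x))"
proof (rule summable_comparison_test'[where g="\<lambda>k. \<bar>coef g k\<bar> * norm x"])
  show "summable (\<lambda>k. \<bar>coef g k\<bar> * norm x)"
    using coef_summable[OF assms] by (rule summable_mult2)
  show "norm (norm (coef g k *\<^sub>R (B ^^ k) x)) \<le> \<bar>coef g k\<bar> * norm x" for k
    using term_norm[of g k x] by simp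
qed

lemma Pw_summable:
  assumes "0 \<le> g" shows "summable (\<lambda>k. coef g k *\<^sub>R (B ^^ k) x)"
  using Pw_norm_summable[OF assms] by (rule summable_norm_cancel_cs)

lemma Pw_lin:
  assumes g: "0 \<le> g" shows "bounded_linear (Pw g)"
proof (rule bounded_linear_intro)
  fix x y
  have "(\<Sum>k. coef g k *\<^sub>R (B ^^ k) (x + y)) = (\<Sum>k. coef g k *\<^sub>R (B ^^ k) x + coef g k *\<^sub>R (B ^^ k) y)"
    using bounded_linear.linear[OF Bk_lin] by (simp add: linear_add scaleR_add_right)
  also have "\<dots> = (\<Sum>k. coef g k *\<^sub>R (B ^^ k) x) + (\<Sum>k. coef g k *\<^sub>R (B ^^ k) y)"
    by (intro suminf_add[symmetric] Pw_summable g)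
  finally show "Pw g (x + y) = Pw g x + Pw g y" unfolding Pw_def by (simp add: scaleR_add_right)
next
  fix r x
  have "(\<Sum>k. coef g k *\<^sub>R (B ^^ k) (r *\<^sub>R x)) = (\<Sum>k. r *\<^sub>R (coef g k *\<^sub>R (B ^^ k) x))"
    using bounded_linear.linear[OF Bk_lin] by (simp add: linear_scale mult.commute)
  also have "\<dots> = r *\<^sub>R (\<Sum>k. coef g k *\<^sub>R (B ^^ k) x)"
    by (intro suminf_scaleR_right[symmetric] Pw_summable g)
  finally show "Pw g (r *\<^sub>R x) = r *\<^sub>R Pw g x" unfolding Pw_def by simp
next
  fix x
  have "norm (\<Sum>k. coef g k *\<^sub>R (B ^^ k) x) \<le> (\<Sum>k. norm (coef g k *\<^sub>R (B ^^ k) x))"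
    by (intro summable_norm_cs Pw_norm_summable g)
  also have "\<dots> \<le> (\<Sum>k. \<bar>coef g k\<bar> * norm x)"
    by (intro suminf_le term_norm Pw_norm_summable g summable_mult2 coef_summable)
  also have "\<dots> = (\<Sum>k. \<bar>coef g k\<bar>) * norm x"
    by (intro suminf_mult2[symmetric] coef_summable g)
  finally have "norm (Pw g x) \<le> onorm A powr g * ((\<Sum>k. \<bar>coef g k\<bar>) * norm x)"
    unfolding Pw_def by (simp add: mult_left_mono)
  then show "norm (Pw g x) \<le> norm x * (onorm A powr g * (\<Sum>k. \<bar>coef g k\<bar>))"
    by (simp add: algebra_simps)
qed

lemma Pw_inner:
  assumes g: "0 \<le> g" shows "inner (Pw g x) y = onorm A powr g * (\<Sum>k. coef g k * inner ((B ^^ k) x) y)"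
proof -
  have "inner (\<Sum>k. coef g k *\<^sub>R (B ^^ k) x) y = (\<Sum>k. inner (coef g k *\<^sub>R (B ^^ k) x) y)"
    by (intro bounded_linear.suminf[OF bounded_linear_inner_left] Pw_summable g)
  then show ?thesis unfolding Pw_def by simp
qed

lemma Pw_sym:
  assumes g: "0 \<le> g" shows "inner (Pw g x) y = inner x (Pw g y)"
proof -
  have "inner x (\<Sum>k. coef g k *\<^sub>R (B ^^ k) y) = (\<Sum>k. inner x (coef g k *\<^sub>R (B ^^ k) y))"
    by (intro bounded_linear.suminf[OF bounded_linear_inner_right] Pw_summable g)
  then have "inner x (Pw g y) = onorm A powr g * (\<Sum>k. coef g k * inner ((B ^^ k) x) y)"
    unfolding Pw_def by (simp add: Bk_sym)
  then show ?thesis using Pw_inner[OF g] by simp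
qed

lemma Pw_0: "Pw 0 x = x"
proof -
  have "(\<lambda>k. coef 0 k *\<^sub>R (B ^^ k) x) = (\<lambda>k. if k = 0 then x else 0)"
  proof
    fix k show "coef 0 k *\<^sub>R (B ^^ k) x = (if k = 0 then x else 0)"
      by (cases k) (simp_all add: coef_0 coef_zero_g)
  qed
  moreover have "(\<lambda>k. if k = 0 then x else 0) sums x"
    using sums_single[of 0 "\<lambda>_. x"] by simp
  ultimately show ?thesis unfolding Pw_def using nzA by (simp add: sums_iff)
qed

lemma Pw_step:
  assumes g: "0 \<le> g" shows "Pw (g + 1) x = A (Pw g x)"
proof -
  define s where "s k = coef g k *\<^sub>R (B ^^ k) x" for k
  define t where "t k = coef (g + 1) k *\<^sub>R (B ^^ k) x" for k
  have ss: "summable s" unfolding s_def by (rule Pw_summable[OF g])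
  have st: "summable t" unfolding t_def by (rule Pw_summable) (use g in simp)
  have sBs: "summable (\<lambda>k. B (s k))" by (rule bounded_linear.summable[OF B_lin ss])
  have sS: "summable (\<lambda>k. s (Suc k))" using ss by (simp add: summable_Suc_iff)
  have tS: "t (Suc k) = s (Suc k) - B (s k)" for k
  proof -
    have "B (s k) = coef g k *\<^sub>R B ((B^^k) x)" unfolding s_def by (rule linear_scale[OF bounded_linear.linear[OF B_lin]])
    then show ?thesis unfolding t_def s_def coef_Suc_pascal by (simp add: scaleR_diff_left)
  qed
  have "suminf t = t 0 + (\<Sum>k. t (Suc k))" using suminf_split_head[OF st] by (metis diff_add_cancel add.commute)
  also have "(\<Sum>k. t (Suc k)) = (\<Sum>k. s (Suc k)) - (\<Sum>k. B (s k))"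
    unfolding tS by (rule suminf_diff[OF sS sBs, symmetric])
  also have "(\<Sum>k. s (Suc k)) = suminf s - s 0" by (rule suminf_split_head[OF ss])
  also have "(\<Sum>k. B (s k)) = B (suminf s)" by (rule bounded_linear.suminf[OF B_lin ss, symmetric])
  finally have e0: "suminf t = t 0 + (suminf s - s 0 - B (suminf s))" .
  have t0: "t 0 = s 0" by (simp add: t_def s_def coef_0)
  have e: "suminf t = suminf s - B (suminf s)" using e0 unfolding t0 by (simp add: algebra_simps)
  have "A (Pw g x) = onorm A *\<^sub>R (Pw g x - B (Pw g x))" by (rule A_via_B)
  also have "B (Pw g x) = onorm A powr g *\<^sub>R B (suminf s)"
    unfolding Pw_def s_def[symmetric] by (simp add: linear_scale[OF bounded_linear.linear[OF B_lin]])
  finally have "A (Pw g x) = (onorm A * onorm A powr g) *\<^sub>R (suminf s - B (suminf s))"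
    unfolding Pw_def s_def[symmetric] by (simp add: scaleR_diff_right)
  moreover have "onorm A powr (g + 1) = onorm A * onorm A powr g"
    using c_pos by (simp add: powr_add)
  ultimately show ?thesis unfolding Pw_def t_def[symmetric] e by simp
qed

end


lemma coef_1: "coef g 1 = - g" by (simp add: coef_def)
lemma coef_1': "coef g (Suc 0) = - g" by (simp add: coef_def)

lemma coef_nonpos:
  assumes "0 < g" "g < 1" "1 \<le> k" shows "coef g k \<le> 0"
proof -
  have "Rp (-g) 1 = - g" by (simp add: Rp_def)
  then have "Rp (-g) 1 \<le> 0" using assms by simp
  then show ?thesis unfolding coef_Rp using Rp_sign[of "-g" 1 k] assms by simp
qed

lemma coef_suminf_nonneg:
  assumes "0 < g" "g < 1" shows "0 \<le> suminf (coef g)"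
proof -
  have sa: "summable (coef g)"
    using coef_summable[of g] assms by (intro summable_rabs_cancel[of "coef g"]) auto
  have "\<forall>n. 0 \<le> sum (coef g) {..<n}"
  proof
    fix n show "0 \<le> sum (coef g) {..<n}"
    proof (cases n)
      case 0 then show ?thesis by simp
    next
      case (Suc m)
      have "sum (coef g) {..<n} = Rp (1 - g) m"
        unfolding Suc lessThan_Suc_atMost coef_partial ..
      also have "\<dots> \<ge> 0" unfolding Rp_def using assms
        by (intro divide_nonneg_pos less_imp_le[OF pochhammer_pos]) auto
      finally show ?thesis .
    qed
  qed
  then show ?thesis using summable_LIMSEQ[OF sa]
    by (intro LIMSEQ_le_const[of "\<lambda>n. sum (coef g) {..<n}"]) auto
qed

context posop
begin

lemma A_inner_zero:
  assumes "inner (A x) x = 0" shows "A x = 0"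
  using bndA[of x] assms by simp

lemma Pw_inj_base:
  assumes injA: "\<And>x. A x = 0 \<Longrightarrow> x = 0"
    and g: "0 < g" "g < 1" and P: "Pw g x = 0"
  shows "x = 0"
proof -
  define u where "u k = inner ((B ^^ k) x) x" for k
  define n2 where "n2 = inner x x"
  have ub: "\<bar>u k\<bar> \<le> n2" for k
  proof -
    have "\<bar>u k\<bar> \<le> norm ((B ^^ k) x) * norm x" unfolding u_def by (rule Cauchy_Schwarz_ineq2)
    also have "\<dots> \<le> norm x * norm x" using Bk_norm by (intro mult_right_mono) auto
    finally show ?thesis unfolding n2_def by (simp add: power2_norm_eq_inner[symmetric] power2_eq_square)
  qed
  have sa: "summable (\<lambda>k. \<bar>coef g k\<bar>)" using coef_summable g by simp
  have sc: "summable (coef g)" using sa by (rule summable_rabs_cancel)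
  have scu: "summable (\<lambda>k. coef g k * u k)"
  proof (rule summable_comparison_test'[where g="\<lambda>k. \<bar>coef g k\<bar> * n2"])
    show "summable (\<lambda>k. \<bar>coef g k\<bar> * n2)" using sa by (rule summable_mult2)
    show "norm (coef g k * u k) \<le> \<bar>coef g k\<bar> * n2" for k
      using ub[of k] by (simp add: abs_mult mult_left_mono)
  qed
  have "0 = inner (Pw g x) x" using P by simp
  also have "\<dots> = onorm A powr g * (\<Sum>k. coef g k * u k)"
    unfolding u_def using g by (intro Pw_inner) simp
  finally have z: "(\<Sum>k. coef g k * u k) = 0" using c_pos by simp
  define v where "v k = coef g k * (u k - n2)" for k
  have sv: "summable v" unfolding v_def right_diff_distrib
    by (intro summable_diff scu summable_mult2 sc)
  have "(\<Sum>k. coef g k * u k) = (\<Sum>k. coef g k * n2 + v k)"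
    unfolding v_def by (simp add: algebra_simps)
  also have "\<dots> = (\<Sum>k. coef g k * n2) + suminf v"
    by (intro suminf_add[symmetric] sv summable_mult2 sc)
  also have "(\<Sum>k. coef g k * n2) = suminf (coef g) * n2"
    by (intro suminf_mult2[symmetric] sc)
  finally have z2: "suminf (coef g) * n2 + suminf v = 0" using z by simp
  have v0: "0 \<le> v k" for k
  proof (cases k)
    case 0 then show ?thesis by (simp add: v_def u_def n2_def)
  next
    case (Suc m)
    then have "coef g k \<le> 0" using coef_nonpos g by simp
    moreover have "u k - n2 \<le> 0" using ub[of k] by simp
    ultimately show ?thesis unfolding v_def by (simp add: mult_nonpos_nonpos)
  qed
  have "sum v {..<2} \<le> suminf v" by (intro sum_le_suminf sv) (auto simp: v0)
  moreover have "sum v {..<2} = v 1"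
    by (simp add: v_def u_def n2_def numeral_2_eq_2 lessThan_Suc)
  moreover have "0 \<le> suminf (coef g) * n2"
    using coef_suminf_nonneg[OF g] by (simp add: n2_def)
  ultimately have "v 1 \<le> 0" using z2 by linarith
  then have "g * (n2 - u 1) \<le> 0" by (simp add: v_def coef_1' algebra_simps)
  moreover have "0 \<le> n2 - u 1" using ub[of 1] by simp
  ultimately have "u 1 = n2" using g by (simp add: mult_le_0_iff)
  then have "inner (B x) x = inner x x" by (simp add: u_def n2_def)
  then have "(1 / onorm A) * inner (A x) x = 0" by (simp add: B_def inner_diff_left)
  then have "inner (A x) x = 0" using c_pos by simp
  then show ?thesis using injA A_inner_zero by blast
qed

lemma Pw_inj:
  assumes injA: "\<And>x. A x = 0 \<Longrightarrow> x = 0"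
    and g: "0 < g" and P: "Pw g x = 0"
  shows "x = 0"
proof -
  have main: "\<forall>h y. 0 < h \<longrightarrow> h < real n \<longrightarrow> Pw h y = 0 \<longrightarrow> y = 0" for n
  proof (induction n)
    case 0 then show ?case by simp
  next
    case (Suc n)
    show ?case
    proof (intro allI impI)
      fix h y assume h0: "0 < h" and hn: "h < real (Suc n)" and Py: "Pw h y = 0"
      show "y = 0"
      proof (cases "h < 1")
        case True then show ?thesis using Pw_inj_base[OF injA] h0 Py by blast
      next
        case False
        then have g1: "0 \<le> h - 1" by simp
        have "A (Pw (h - 1) y) = Pw h y" using Pw_step[OF g1] by simp
        then have P1: "Pw (h - 1) y = 0" using injA Py by simp
        show ?thesis
        proof (cases "h = 1")
          case True then show ?thesis using P1 Pw_0 by simp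
        next
          case False
          then have "0 < h - 1" "h - 1 < real n" using \<open>\<not> h < 1\<close> hn by auto
          then show ?thesis using Suc.IH P1 by blast
        qed
      qed
    qed
  qed
  obtain n :: nat where "g < real n" using reals_Archimedean2 by blast
  then show ?thesis using main[of n] g P by blast
qed

end


definition hh :: "real \<Rightarrow> real \<Rightarrow> real" where
  "hh th s = s powr th * sqrt (1 + 1 / s\<^sup>2)"

lemma Nconst_pos: assumes "0 \<le> th" "th \<le> 1" shows "0 < Nconst th"
  unfolding Nconst_def using assms by auto

lemma ln_concave2:
  fixes a b al :: real
  assumes "0 \<le> al" "al \<le> 1" "0 < a" "0 < b"
  shows "al * ln a + (1 - al) * ln b \<le> ln (al * a + (1 - al) * b)"
  using assms ln_concave by (simp add: concave_on_iff)

lemma ln_Nconst: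
  assumes "0 < th" "th < 1"
  shows "ln (Nconst th) = - (th * ln th + (1 - th) * ln (1 - th)) / 2"
proof -
  have q: "0 < th powr th * (1 - th) powr (1 - th)" using assms by simp
  have "ln (Nconst th) = (- 1 / 2) * ln (th powr th * (1 - th) powr (1 - th))"
    unfolding Nconst_def using assms q by (simp add: ln_powr)
  also have "\<dots> = - (th * ln th + (1 - th) * ln (1 - th)) / 2"
    using assms by (simp add: ln_mult ln_powr, simp add: field_simps)
  finally show ?thesis .
qed

lemma ln_hh:
  assumes "0 < s"
  shows "ln (hh th s) = th * ln s + ln (1 + 1 / s\<^sup>2) / 2"
proof -
  have p: "0 < 1 + 1 / s\<^sup>2" using assms by (simp add: add_pos_nonneg)
  show ?thesis unfolding hh_def using assms p by (simp add: ln_mult ln_powr ln_sqrt)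
qed

lemma sq_sqrt_aux:
  fixes s :: real assumes s: "0 < s"
  shows "s * sqrt (1 + 1 / s\<^sup>2) = sqrt (s\<^sup>2 + 1)"
proof -
  have "s\<^sup>2 * (1 + 1/s\<^sup>2) = s\<^sup>2 + 1" using s by (simp add: field_simps)
  then have "sqrt (s\<^sup>2 + 1) = sqrt (s\<^sup>2) * sqrt (1 + 1/s\<^sup>2)" by (metis real_sqrt_mult)
  then show ?thesis using s by simp
qed

lemma hh_pos: "0 < s \<Longrightarrow> 0 < hh th s"
  unfolding hh_def by (simp add: add_pos_nonneg)

lemma hh_ge:
  assumes th: "0 \<le> th" "th \<le> 1" and s: "0 < s"
  shows "Nconst th \<le> hh th s"
proof -
  consider "th = 0" | "th = 1" | "0 < th \<and> th < 1" using th by linarith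
  then show ?thesis
  proof cases
    case 1
    then show ?thesis using s by (simp add: hh_def Nconst_def)
  next
    case 2
    have "1 \<le> s * sqrt (1 + 1 / s\<^sup>2)"
    proof -
      have "s * sqrt (1 + 1 / s\<^sup>2) = sqrt (s\<^sup>2 + 1)"
        using s by (rule sq_sqrt_aux)
      also have "1 \<le> sqrt (s\<^sup>2 + 1)" by simp
      finally show ?thesis by simp
    qed
    then show ?thesis using s 2 by (simp add: hh_def Nconst_def)
  next
    case 3
    then have t0: "0 < th" and t1: "th < 1" by auto
    have "(1 - th) * ln (1 / (1 - th)) + (1 - (1 - th)) * ln (1 / (th * s\<^sup>2))
          \<le> ln ((1 - th) * (1 / (1 - th)) + (1 - (1 - th)) * (1 / (th * s\<^sup>2)))"
      using t0 t1 s by (intro ln_concave2) auto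
    also have "(1 - th) * (1 / (1 - th)) + (1 - (1 - th)) * (1 / (th * s\<^sup>2)) = 1 + 1 / s\<^sup>2"
      using t0 t1 by (simp add: field_simps)
    finally have ineq: "- (1 - th) * ln (1 - th) - th * (ln th + 2 * ln s) \<le> ln (1 + 1 / s\<^sup>2)"
      using t0 t1 s by (simp add: ln_div ln_mult ln_realpow algebra_simps)
    have "ln (Nconst th) \<le> ln (hh th s)"
      unfolding ln_Nconst[OF t0 t1] ln_hh[OF s] using ineq by (simp add: algebra_simps)
    then show ?thesis using Nconst_pos[OF th] hh_pos[OF s] by simp
  qed
qed

lemma hh_near:
  assumes th: "0 \<le> th" "th \<le> 1" and e: "0 < e"
  shows "\<exists>s>0. hh th s \<le> Nconst th + e"
proof -
  consider "th = 0" | "th = 1" | "0 < th \<and> th < 1" using th by linarith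
  then show ?thesis
  proof cases
    case 1
    have "sqrt (1 + 1 / (1/e)\<^sup>2) \<le> 1 + e"
    proof -
      have "1 + 1 / (1/e)\<^sup>2 \<le> (1 + e)\<^sup>2" using e by (simp add: power2_eq_square algebra_simps)
      then have "sqrt (1 + 1 / (1/e)\<^sup>2) \<le> sqrt ((1 + e)\<^sup>2)" by (rule real_sqrt_le_mono)
      then show ?thesis using e by simp
    qed
    then show ?thesis using 1 e by (intro exI[of _ "1/e"]) (simp add: hh_def Nconst_def)
  next
    case 2
    have "e * sqrt (1 + 1 / e\<^sup>2) \<le> 1 + e"
    proof -
      have "e * sqrt (1 + 1 / e\<^sup>2) = sqrt (e\<^sup>2 + 1)"
        using e by (rule sq_sqrt_aux)
      also have "\<dots> \<le> sqrt ((1 + e)\<^sup>2)" using e by (intro real_sqrt_le_mono) (simp add: power2_eq_square algebra_simps)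
      finally show ?thesis using e by simp
    qed
    then show ?thesis using 2 e by (intro exI[of _ e]) (simp add: hh_def Nconst_def)
  next
    case 3
    then have t0: "0 < th" and t1: "th < 1" by auto
    define s where "s = sqrt ((1 - th) / th)"
    have s: "0 < s" using t0 t1 s_def by simp
    have s2: "s\<^sup>2 = (1 - th) / th" using t0 t1 s_def by simp
    have "1 + 1 / s\<^sup>2 = 1 / (1 - th)" unfolding s2 using t0 t1 by (simp add: field_simps)
    then have "ln (hh th s) = th * ln s - ln (1 - th) / 2" unfolding ln_hh[OF s] using t1 by (simp add: ln_div)
    also have "ln s = (ln (1 - th) - ln th) / 2" unfolding s_def using t0 t1 by (simp add: ln_sqrt ln_div)
    finally have "ln (hh th s) = ln (Nconst th)" unfolding ln_Nconst[OF t0 t1] by (simp add: algebra_simps)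
    then have "hh th s = Nconst th" using Nconst_pos[OF th] hh_pos[OF s] by simp
    then show ?thesis using s e by (intro exI[of _ s]) simp
  qed
qed

lemma hh_scale:
  assumes t: "0 < t" and b: "0 < b"
  shows "b powr (- th) * sqrt (1 + b\<^sup>2 / t\<^sup>2) = t powr (- th) * hh th (t / b)"
proof -
  have "t powr (- th) * (t / b) powr th = b powr (- th)"
    using t b by (simp add: powr_divide powr_minus field_simps)
  moreover have "1 + 1 / (t / b)\<^sup>2 = 1 + b\<^sup>2 / t\<^sup>2" by (simp add: power_divide)
  ultimately show ?thesis unfolding hh_def by (metis mult.assoc)
qed


lemma cs2:
  fixes a1 a2 b1 b2 :: real
  shows "a1*b1 + a2*b2 \<le> sqrt (a1\<^sup>2 + a2\<^sup>2) * sqrt (b1\<^sup>2 + b2\<^sup>2)"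
proof -
  have "(a1*b1 + a2*b2)\<^sup>2 \<le> (a1\<^sup>2 + a2\<^sup>2) * (b1\<^sup>2 + b2\<^sup>2)"
  proof -
    have "(a1\<^sup>2 + a2\<^sup>2) * (b1\<^sup>2 + b2\<^sup>2) - (a1*b1 + a2*b2)\<^sup>2 = (a1*b2 - a2*b1)\<^sup>2"
      by (simp add: power2_eq_square algebra_simps)
    then show ?thesis by (smt (verit) zero_le_power2)
  qed
  then have "a1*b1 + a2*b2 \<le> sqrt ((a1\<^sup>2 + a2\<^sup>2) * (b1\<^sup>2 + b2\<^sup>2))" by (rule real_le_rsqrt)
  then show ?thesis by (simp add: real_sqrt_mult)
qed

lemma L2: "(X::real) \<le> (Y+Z)/2 \<Longrightarrow> M = (a2+b2)/2 - d/4 \<Longrightarrow> X + T*M \<le> (Y + T*a2 + (Z + T*b2))/2 - (T/4)*d"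
proof -
  assume h: "X \<le> (Y+Z)/2" "M = (a2+b2)/2 - d/4"
  have e: "T*M = T*a2/2 + T*b2/2 - T*d/4" unfolding h(2) by (simp add: field_simps)
  have "X + T*M = X + T*a2/2 + T*b2/2 - T*d/4" unfolding e by simp
  also have "\<dots> \<le> (Y+Z)/2 + T*a2/2 + T*b2/2 - T*d/4" using h(1) by simp
  also have "\<dots> = (Y + T*a2 + (Z + T*b2))/2 - (T/4)*d" by (simp add: field_simps)
  finally show ?thesis .
qed

locale symop =
  fixes P :: "'a::{real_inner,complete_space} \<Rightarrow> 'a"
  assumes blP: "bounded_linear P"
    and symP: "\<And>u v. inner (P u) v = inner u (P v)"
begin

definition Phi where "Phi x t y = (norm (x - P y))\<^sup>2 + t\<^sup>2 * (norm y)\<^sup>2"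
definition Kf where "Kf x t = Inf ((\<lambda>y. sqrt (Phi x t y)) ` UNIV)"

lemma P_diff: "P (u - v) = P u - P v" using linear_diff[OF bounded_linear.linear[OF blP]] .
lemma P_add: "P (u + v) = P u + P v" using linear_add[OF bounded_linear.linear[OF blP]] .
lemma P_scale: "P (r *\<^sub>R u) = r *\<^sub>R P u" using linear_scale[OF bounded_linear.linear[OF blP]] .

lemma K_upper:
  assumes t: "0 < t"
  shows "\<bar>inner x w\<bar> \<le> sqrt (Phi x t y) * sqrt ((norm w)\<^sup>2 + (norm (P w))\<^sup>2 / t\<^sup>2)"
proof -
  have "inner x w = inner (x - P y) w + inner y (P w)"
    by (simp add: inner_diff_left symP)
  then have "\<bar>inner x w\<bar> \<le> \<bar>inner (x - P y) w\<bar> + \<bar>inner y (P w)\<bar>" by simp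
  also have "\<dots> \<le> norm (x - P y) * norm w + norm y * norm (P w)"
    by (intro add_mono Cauchy_Schwarz_ineq2)
  also have "norm y * norm (P w) = (t * norm y) * (norm (P w) / t)" using t by simp
  also have "norm (x - P y) * norm w + (t * norm y) * (norm (P w) / t)
      \<le> sqrt ((norm (x - P y))\<^sup>2 + (t * norm y)\<^sup>2) * sqrt ((norm w)\<^sup>2 + (norm (P w) / t)\<^sup>2)"
    by (rule cs2)
  also have "\<dots> = sqrt (Phi x t y) * sqrt ((norm w)\<^sup>2 + (norm (P w))\<^sup>2 / t\<^sup>2)"
    unfolding Phi_def by (simp add: power_mult_distrib power_divide)
  finally show ?thesis .
qed

lemma K_min:
  assumes t: "0 < t"
  shows "\<exists>y. (\<forall>z. Phi x t y \<le> Phi x t z) \<and> P (x - P y) = t\<^sup>2 *\<^sub>R y"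
proof -
  have cP: "continuous_on UNIV P" using bounded_linear.continuous_on[OF blP continuous_on_id] by simp
  have cont: "continuous_on UNIV (Phi x t)" unfolding Phi_def[abs_def]
    by (intro continuous_intros continuous_on_compose2[OF cP]) auto
  have bdd: "0 \<le> Phi x t z" for z unfolding Phi_def by simp
  have conv: "Phi x t ((1/2) *\<^sub>R (a + b)) \<le> (Phi x t a + Phi x t b)/2 - (t\<^sup>2/4) * (norm (a - b))\<^sup>2" for a b
  proof -
    have hx: "(1/2) *\<^sub>R x + (1/2) *\<^sub>R x = x" by (simp flip: scaleR_add_left)
    have e1: "x - P ((1/2) *\<^sub>R (a + b)) = (1/2) *\<^sub>R ((x - P a) + (x - P b))"
    proof -
      have "(1/2) *\<^sub>R ((x - P a) + (x - P b)) = ((1/2) *\<^sub>R x + (1/2) *\<^sub>R x) - (1/2) *\<^sub>R (P a + P b)"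
        by (simp add: algebra_simps)
      then show ?thesis by (simp add: hx P_scale P_add)
    qed
    have "(norm (x - P ((1/2) *\<^sub>R (a + b))))\<^sup>2 \<le> ((norm (x - P a))\<^sup>2 + (norm (x - P b))\<^sup>2) / 2"
    proof -
      have L: "\<And>A B C::real. 0 \<le> C \<Longrightarrow> (A + B)/2 - C/4 \<le> (A+B)/2" by linarith
      show ?thesis unfolding e1 par_mid by (rule L) simp
    qed
    moreover have "(norm ((1/2) *\<^sub>R (a + b)))\<^sup>2 = ((norm a)\<^sup>2 + (norm b)\<^sup>2)/2 - (norm (a - b))\<^sup>2/4"
      by (rule par_mid)
    ultimately show ?thesis unfolding Phi_def by (rule L2)
  qed
  obtain y where y: "\<And>z. Phi x t y \<le> Phi x t z"
    using min_exists[OF cont bdd, of "t\<^sup>2/4"] conv t by force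
  have "inner (P (x - P y) - t\<^sup>2 *\<^sub>R y) h = 0" for h
  proof -
    have q: "0 \<le> ((norm (P h))\<^sup>2 + t\<^sup>2 * (norm h)\<^sup>2) * s\<^sup>2 + (2 * t\<^sup>2 * inner y h - 2 * inner (x - P y) (P h)) * s" for s
    proof -
      have "Phi x t (y + s *\<^sub>R h) = Phi x t y + ((norm (P h))\<^sup>2 + t\<^sup>2 * (norm h)\<^sup>2) * s\<^sup>2
              + (2 * t\<^sup>2 * inner y h - 2 * inner (x - P y) (P h)) * s"
      proof -
        have e2: "x - P (y + s *\<^sub>R h) = (x - P y) - s *\<^sub>R P h" by (simp add: P_add P_scale)
        show ?thesis unfolding Phi_def power2_norm_eq_inner e2
          by (simp add: inner_diff_left inner_diff_right inner_add_left inner_add_right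
              inner_commute power2_eq_square algebra_simps)
      qed
      then show ?thesis using y[of "y + s *\<^sub>R h"] by simp
    qed
    have "2 * t\<^sup>2 * inner y h - 2 * inner (x - P y) (P h) = 0" by (rule quad_zero[OF q])
    then show ?thesis by (simp add: inner_diff_left symP)
  qed
  then have "P (x - P y) - t\<^sup>2 *\<^sub>R y = 0" using inner_ext[of "P (x - P y) - t\<^sup>2 *\<^sub>R y" 0] by simp
  then show ?thesis using y by auto
qed

lemma Kf_eq:
  assumes t: "0 < t" and y: "\<And>z. Phi x t y \<le> Phi x t z"
  shows "Kf x t = sqrt (Phi x t y)"
  unfolding Kf_def by (rule cInf_eq_minimum) (auto intro: y)

lemma Kf_nonneg: assumes "0 < t" shows "0 \<le> Kf x t"
proof -
  obtain y where y: "\<And>z. Phi x t y \<le> Phi x t z" using K_min[OF assms] by blast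
  then show ?thesis using Kf_eq[OF assms y] by (simp add: Phi_def)
qed

lemma K_upper2:
  assumes t: "0 < t"
  shows "\<bar>inner x w\<bar> \<le> Kf x t * sqrt ((norm w)\<^sup>2 + (norm (P w))\<^sup>2 / t\<^sup>2)"
proof -
  obtain y where y: "\<And>z. Phi x t y \<le> Phi x t z" using K_min[OF t] by blast
  then show ?thesis using Kf_eq[OF t y] K_upper[OF t, of x w y] by simp
qed

lemma K_attain:
  assumes t: "0 < t" and K: "0 < Kf x t"
  shows "\<exists>w. norm w = 1 \<and> \<bar>inner x w\<bar> = Kf x t * sqrt (1 + (norm (P w))\<^sup>2 / t\<^sup>2)"
proof -
  obtain y where y: "\<And>z. Phi x t y \<le> Phi x t z" and fo: "P (x - P y) = t\<^sup>2 *\<^sub>R y"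
    using K_min[OF t] by blast
  define K where "K = Kf x t"
  have K2: "K\<^sup>2 = Phi x t y" using Kf_eq[OF t y] K_def by (simp add: Phi_def)
  define w0 where "w0 = x - P y"
  have Pw0: "P w0 = t\<^sup>2 *\<^sub>R y" using fo w0_def by simp
  have ix: "inner x w0 = K\<^sup>2"
  proof -
    have "inner x w0 = inner w0 w0 + inner (P y) w0" by (simp add: w0_def inner_diff_left)
    also have "inner (P y) w0 = t\<^sup>2 * inner y y" by (simp add: symP Pw0)
    finally show ?thesis unfolding K2 Phi_def w0_def[symmetric] by (simp add: power2_norm_eq_inner)
  qed
  have nn: "(norm w0)\<^sup>2 + (norm (P w0))\<^sup>2 / t\<^sup>2 = K\<^sup>2"
    unfolding K2 Phi_def w0_def[symmetric] Pw0 using t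
    by (simp add: power_mult_distrib power2_eq_square field_simps)
  have w0nz: "w0 \<noteq> 0"
  proof
    assume "w0 = 0"
    then have "K\<^sup>2 = 0" using nn linear_0[OF bounded_linear.linear[OF blP]] by simp
    then show False using K K_def by simp
  qed
  define n where "n = norm w0"
  have n: "0 < n" using w0nz n_def by simp
  define w where "w = (1 / n) *\<^sub>R w0"
  have nw: "norm w = 1" using n by (simp add: w_def n_def)
  have "\<bar>inner x w\<bar> = K\<^sup>2 / n" using ix n by (simp add: w_def)
  moreover have "sqrt (1 + (norm (P w))\<^sup>2 / t\<^sup>2) = K / n"
  proof -
    have "1 + (norm (P w))\<^sup>2 / t\<^sup>2 = ((norm w0)\<^sup>2 + (norm (P w0))\<^sup>2 / t\<^sup>2) / n\<^sup>2"
      using n by (simp add: w_def P_scale n_def power_divide field_simps)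
    also have "\<dots> = (K / n)\<^sup>2" unfolding nn by (simp add: power_divide)
    finally show ?thesis using K K_def n by simp
  qed
  ultimately have "\<bar>inner x w\<bar> = K * sqrt (1 + (norm (P w))\<^sup>2 / t\<^sup>2)" by (simp add: power2_eq_square)
  then show ?thesis using nw K_def by blast
qed

end


lemma TsT_inner:
  fixes T :: "'a::{real_inner,complete_space} \<Rightarrow> 'b::real_inner"
  assumes "bounded_linear T"
  shows "inner (TsT T x) z = inner (T x) (T z)"
proof -
  have "inner (T z) (T x) = inner z (adjoint T (T x))" by (rule adjoint_works'[OF assms])
  then show ?thesis unfolding TsT_def by (simp add: inner_commute)
qed

lemma TsT_props:
  fixes T :: "'a::{real_inner,complete_space} \<Rightarrow> 'b::{real_inner,complete_space}"
  assumes bl: "bounded_linear T" and inj: "inj T" and nz: "T \<noteq> (\<lambda>_. 0)"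
  shows "posop (TsT T) \<and> (\<forall>x. TsT T x = 0 \<longrightarrow> x = 0)"
proof -
  interpret T: bounded_linear T by fact
  define A where "A = TsT T"
  have I: "inner (A x) z = inner (T x) (T z)" for x z unfolding A_def by (rule TsT_inner[OF bl])
  obtain K where K: "\<And>x. norm (T x) \<le> norm x * K" and K0: "0 < K" using T.pos_bounded by blast
  have add: "A (x + y) = A x + A y" for x y
    by (rule inner_ext) (simp add: I inner_add_left T.add)
  have scl: "A (r *\<^sub>R x) = r *\<^sub>R A x" for r x
    by (rule inner_ext) (simp add: I T.scaleR)
  have nb: "norm (A x) \<le> norm x * (K * K)" for x
  proof (cases "A x = 0")
    case True then show ?thesis using K0 by simp
  next
    case False
    have "(norm (A x))\<^sup>2 = inner (T x) (T (A x))" by (simp add: power2_norm_eq_inner I)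
    also have "\<dots> \<le> norm (T x) * norm (T (A x))" by (rule Cauchy_Schwarz_ineq2[THEN abs_le_D1])
    also have "\<dots> \<le> (norm x * K) * (norm (A x) * K)" using K K0 by (intro mult_mono) auto
    finally have "norm (A x) * norm (A x) \<le> (norm x * (K * K)) * norm (A x)"
      by (simp add: power2_eq_square algebra_simps)
    then show ?thesis using False by simp
  qed
  have blA: "bounded_linear A" by (rule bounded_linear_intro[OF add scl nb])
  have symA: "inner (A x) y = inner x (A y)" for x y
    by (simp add: I inner_commute[of x] inner_commute[of "T x"])
  have posA: "0 \<le> inner (A x) x" for x by (simp add: I)
  have ATx: "inner (A x) x = (norm (T x))\<^sup>2" for x by (simp add: I power2_norm_eq_inner)
  have injA: "A x = 0 \<Longrightarrow> x = 0" for x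
  proof -
    assume "A x = 0"
    then have "(norm (T x))\<^sup>2 = 0" using ATx[of x] by simp
    then have "T x = T 0" by simp
    then show "x = 0" using inj by (meson injD)
  qed
  have nzA: "onorm A \<noteq> 0"
  proof
    assume "onorm A = 0"
    then have "\<forall>x. A x = 0" using onorm_eq_0[OF blA] by simp
    then have Az: "A y = 0" for y by simp
    have a0: "y = 0" for y :: 'a using Az[of y] by (rule injA)
    have "T = (\<lambda>_. 0)"
    proof
      fix y :: 'a
      have "y = 0" by (rule a0)
      then show "T y = 0" by (simp add: T.zero)
    qed
    then show False using nz by simp
  qed
  define c where "c = onorm A"
  have c0: "0 \<le> c" unfolding c_def by (rule onorm_pos_le[OF blA])
  have Tz: "(norm (T z))\<^sup>2 \<le> c * (norm z)\<^sup>2" for z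
  proof -
    have "(norm (T z))\<^sup>2 = inner (A z) z" by (simp add: ATx)
    also have "\<dots> \<le> norm (A z) * norm z" by (rule Cauchy_Schwarz_ineq2[THEN abs_le_D1])
    also have "\<dots> \<le> (c * norm z) * norm z" unfolding c_def
      by (intro mult_right_mono onorm[OF blA]) auto
    finally show ?thesis by (simp add: power2_eq_square algebra_simps)
  qed
  have bndA: "(norm (A x))\<^sup>2 \<le> onorm A * inner (A x) x" for x
  proof (cases "A x = 0")
    case True then show ?thesis using c0 posA c_def by simp
  next
    case False
    have "((norm (A x))\<^sup>2)\<^sup>2 = (inner (T x) (T (A x)))\<^sup>2" by (simp add: power2_norm_eq_inner I)
    also have "\<dots> \<le> (norm (T x) * norm (T (A x)))\<^sup>2"
      by (metis Cauchy_Schwarz_ineq2 abs_ge_zero power2_abs power_mono)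
    also have "\<dots> = (norm (T x))\<^sup>2 * (norm (T (A x)))\<^sup>2" by (simp add: power_mult_distrib)
    also have "\<dots> \<le> (norm (T x))\<^sup>2 * (c * (norm (A x))\<^sup>2)" by (intro mult_left_mono Tz) auto
    finally have "(norm (A x))\<^sup>2 * (norm (A x))\<^sup>2 \<le> (c * (norm (T x))\<^sup>2) * (norm (A x))\<^sup>2"
      by (simp add: power2_eq_square algebra_simps)
    then have "(norm (A x))\<^sup>2 \<le> c * (norm (T x))\<^sup>2" by (rule mult_right_le_imp_le) (use False in simp)
    then show ?thesis using ATx c_def by simp
  qed
  have "posop A" unfolding posop_def by (intro conjI allI blA symA posA bndA nzA)
  then show ?thesis using injA A_def by blast
qed

theorem proposition2:
  fixes T :: "'a::{real_inner, complete_space} \<Rightarrow> 'b::{real_inner, complete_space}"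
    and x :: 'a and \<nu> \<gamma> :: real
  assumes "bounded_linear T" and "inj T" and "T \<noteq> (\<lambda>_. 0)"
    and "0 \<le> \<nu>" and "\<nu> \<le> \<gamma>" and "0 < \<gamma>"
  shows "(SUP \<omega>\<in>{\<omega>. norm \<omega> = 1}.
            ereal (norm (op_powr (TsT T) \<gamma> \<omega>) powr (- \<nu> / \<gamma>) * \<bar>inner x \<omega>\<bar>))
         = ereal (Nconst (\<nu> / \<gamma>)) * interp_norm T \<nu> \<gamma> x"
proof -
  note bl = assms(1) and injT = assms(2) and nzT = assms(3)
  have g: "0 < \<gamma>" using assms(6) .
  define A where "A = TsT T"
  have pA: "posop A" and injA: "\<And>y. A y = 0 \<Longrightarrow> y = 0"
    using TsT_props[OF bl injT nzT] A_def by auto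
  interpret posop A by (rule pA)
  define Q where "Q = op_powr A \<gamma>"
  have Qeq: "Q y = Pw \<gamma> y" for y by (simp add: Q_def op_powr_eq)
  have blQ: "bounded_linear Q"
  proof -
    have "Q = Pw \<gamma>" using Qeq by (intro ext) simp
    then show ?thesis using Pw_lin[of \<gamma>] g by simp
  qed
  have symQ: "inner (Q u) v = inner u (Q v)" for u v using Pw_sym[of \<gamma>] g by (simp add: Qeq)
  have Q0: "Q y = 0 \<Longrightarrow> y = 0" for y using Pw_inj[OF injA g] by (simp add: Qeq)
  have injQ: "inj Q"
  proof (rule injI)
    fix u v assume "Q u = Q v"
    then have "Q (u - v) = 0" using linear_diff[OF bounded_linear.linear[OF blQ]] by simp
    then have "u - v = 0" by (rule Q0)
    then show "u = v" by simp
  qed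
  have sQ: "symop Q" unfolding symop_def by (intro conjI allI blQ symQ)
  interpret symop Q by (rule sQ)
  have opQ: "op_powr (TsT T) \<gamma> = Q" by (simp add: Q_def A_def)
  have Kfeq: "Kfun T \<gamma> t x = Kf x t" for t
    unfolding Kfun_def Xg_def gnorm_def Kf_def Phi_def opQ
    by (simp add: image_image the_inv_into_f_f[OF injQ])
  define th where "th = \<nu> / \<gamma>"
  have th: "0 \<le> th" "th \<le> 1" using assms th_def by auto
  have expo: "- \<nu> / \<gamma> = - th" by (simp add: th_def)
  define N where "N = Nconst th"
  have N: "0 < N" using Nconst_pos[OF th] N_def by simp
  define L where "L w = norm (Q w) powr (- th) * \<bar>inner x w\<bar>" for w
  define U where "U = {w::'a. norm w = 1}"
  define S where "S = (SUP t\<in>{0<..}. ereal (t powr (- th) * Kf x t))"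
  have lhs: "(SUP \<omega>\<in>{\<omega>. norm \<omega> = 1}.
            ereal (norm (op_powr (TsT T) \<gamma> \<omega>) powr (- \<nu> / \<gamma>) * \<bar>inner x \<omega>\<bar>))
        = (SUP w\<in>U. ereal (L w))"
    unfolding opQ expo L_def U_def ..
  have rhs: "ereal (Nconst (\<nu> / \<gamma>)) * interp_norm T \<nu> \<gamma> x = ereal N * S"
    unfolding interp_norm_def expo Kfeq S_def N_def th_def ..
  have bpos: "0 < norm (Q w)" if "norm w = 1" for w
  proof -
    have "w \<noteq> 0" using that by auto
    then have "Q w \<noteq> 0" using Q0 by blast
    then show ?thesis by simp
  qed
  have Lnn: "0 \<le> L w" for w unfolding L_def by simp
  have upper: "L w \<le> t powr (- th) * Kf x t * hh th (t / norm (Q w))"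
    if w: "norm w = 1" and t: "0 < t" for w t
  proof -
    define b where "b = norm (Q w)"
    have b: "0 < b" using bpos[OF w] b_def by simp
    have "\<bar>inner x w\<bar> \<le> Kf x t * sqrt (1 + b\<^sup>2 / t\<^sup>2)"
      using K_upper2[OF t, of x w] w b_def by simp
    then have "L w \<le> b powr (- th) * (Kf x t * sqrt (1 + b\<^sup>2 / t\<^sup>2))"
      unfolding L_def b_def[symmetric] by (intro mult_left_mono) auto
    also have "\<dots> = Kf x t * (b powr (- th) * sqrt (1 + b\<^sup>2 / t\<^sup>2))" by simp
    also have "\<dots> = t powr (- th) * Kf x t * hh th (t / b)" unfolding hh_scale[OF t b] by simp
    finally show ?thesis unfolding b_def .
  qed
  have attain: "\<exists>w. norm w = 1 \<and> L w = t powr (- th) * Kf x t * hh th (t / norm (Q w))"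
    if t: "0 < t" and K: "0 < Kf x t" for t
  proof -
    obtain w where w: "norm w = 1" and e: "\<bar>inner x w\<bar> = Kf x t * sqrt (1 + (norm (Q w))\<^sup>2 / t\<^sup>2)"
      using K_attain[OF t K] by blast
    define b where "b = norm (Q w)"
    have b: "0 < b" using bpos[OF w] b_def by simp
    have "L w = Kf x t * (b powr (- th) * sqrt (1 + b\<^sup>2 / t\<^sup>2))"
      unfolding L_def e b_def by simp
    also have "\<dots> = t powr (- th) * Kf x t * hh th (t / b)" unfolding hh_scale[OF t b] by simp
    finally show ?thesis using w b_def by blast
  qed
  obtain z where "T z \<noteq> 0" using nzT by auto
  then have z0: "z \<noteq> 0" using linear_0[OF bounded_linear.linear[OF bl]] by auto
  define w0 where "w0 = (1 / norm z) *\<^sub>R z"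
  have w0: "w0 \<in> U" unfolding U_def w0_def using z0 by simp
  have "(SUP w\<in>U. ereal (L w)) = ereal N * S"
  proof (rule antisym)
    show "(SUP w\<in>U. ereal (L w)) \<le> ereal N * S"
    proof (rule SUP_least)
      fix w assume "w \<in> U"
      then have w: "norm w = 1" by (simp add: U_def)
      have Sge: "ereal (t powr (- th) * Kf x t) \<le> S" if "0 < t" for t
        unfolding S_def using that by (intro SUP_upper) auto
      show "ereal (L w) \<le> ereal N * S"
      proof (cases "S = \<infinity>")
        case True then show ?thesis using N by simp
      next
        case False
        have k1: "0 \<le> 1 powr (- th) * Kf x 1" using Kf_nonneg[of 1 x] by simp
        have S0: "ereal 0 \<le> S" by (rule order_trans[OF _ Sge[of 1]]) (use k1 in simp_all)
        then obtain r where r: "S = ereal r" using False by (cases S) auto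
        have r0: "0 \<le> r" using S0 r by simp
        have rb: "t powr (- th) * Kf x t \<le> r" if "0 < t" for t using Sge[OF that] r by simp
        define b where "b = norm (Q w)"
        have b: "0 < b" using bpos[OF w] b_def by simp
        have "L w \<le> N * r + e" if e: "0 < e" for e
        proof -
          have "0 < e / (r + 1)" using e r0 by simp
          then obtain s where s: "0 < s" and hs: "hh th s \<le> N + e / (r + 1)"
            using hh_near[OF th] N_def by blast
          have sb: "0 < s * b" using s b by simp
          have "L w \<le> (s * b) powr (- th) * Kf x (s * b) * hh th (s * b / b)"
            using upper[OF w sb] b_def by simp
          also have "s * b / b = s" using b by simp
          also have "(s * b) powr (- th) * Kf x (s * b) * hh th s \<le> r * hh th s"
            using rb[OF sb] less_imp_le[OF hh_pos[OF s, of th]] by (rule mult_right_mono)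
          also have "\<dots> \<le> r * (N + e / (r + 1))" using hs r0 by (intro mult_left_mono) auto
          also have "\<dots> = N * r + e * (r / (r + 1))" using r0 by (simp add: field_simps)
          also have "\<dots> \<le> N * r + e"
          proof -
            have "r / (r + 1) \<le> 1" using r0 by simp
            then have "e * (r / (r + 1)) \<le> e * 1" using e by (intro mult_left_mono) auto
            then show ?thesis by simp
          qed
          finally show ?thesis .
        qed
        then have "L w \<le> N * r" by (rule field_le_epsilon)
        then show ?thesis using r by simp
      qed
    qed
  next
    have "ereal N * S = (SUP t\<in>{0<..}. ereal N * ereal (t powr (- th) * Kf x t))"
      unfolding S_def using N by (intro Sup_ereal_mult_left') auto
    also have "\<dots> \<le> (SUP w\<in>U. ereal (L w))"
    proof (rule SUP_least)
      fix t :: real assume "t \<in> {0<..}"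
      then have t: "0 < t" by simp
      show "ereal N * ereal (t powr (- th) * Kf x t) \<le> (SUP w\<in>U. ereal (L w))"
      proof (cases "Kf x t = 0")
        case True
        have "ereal N * ereal (t powr (- th) * Kf x t) = ereal (L w0) - ereal (L w0)"
          using True by simp
        also have "\<dots> \<le> ereal (L w0)" using Lnn[of w0] by simp
        also have "\<dots> \<le> (SUP w\<in>U. ereal (L w))" using w0 by (intro SUP_upper)
        finally show ?thesis .
      next
        case False
        then have K: "0 < Kf x t" using Kf_nonneg[OF t, of x] by simp
        obtain w where w: "norm w = 1" and Lw: "L w = t powr (- th) * Kf x t * hh th (t / norm (Q w))"
          using attain[OF t K] by blast
        have "0 < t / norm (Q w)" using t bpos[OF w] by simp
        then have hge: "N \<le> hh th (t / norm (Q w))" using hh_ge[OF th] N_def by simp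
        have "N * (t powr (- th) * Kf x t) \<le> t powr (- th) * Kf x t * hh th (t / norm (Q w))"
          using hge K t by (simp add: mult.commute mult_left_mono)
        then have "ereal N * ereal (t powr (- th) * Kf x t) \<le> ereal (L w)" using Lw by simp
        also have "\<dots> \<le> (SUP w\<in>U. ereal (L w))" using w by (intro SUP_upper) (simp add: U_def)
        finally show ?thesis .
      qed
    qed
    finally show "ereal N * S \<le> (SUP w\<in>U. ereal (L w))" .
  qed
  then show ?thesis unfolding lhs rhs .
qed


end
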